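(* Let $(V,\omega)$ be a nondegenerate simple CFT type vertex operator algebra generated by $V_1$ and satisfying condition (T). If $\tilde\omega\in\operatorname{Sc}(V,\omega)$ with $\tilde\omega\ne0$ and $\tilde\omega\ne\omega$, then $\dim C_V(C_V(\langle\tilde\omega\rangle))_1>0$ and $\dim C_V(\langle\tilde\omega\rangle)_1>0$.
   Context: Nondegenerate simple CFT type: $V$ simple, $V=\bigoplus_{n\ge0}V_n$, $V_0=\mathbb C\mathbf 1$, and the form $u_1v=\langle u,v\rangle\mathbf 1$ on $V_1$ is nondegenerate. Semi-conformal vector of $(V,\omega)$: conformal vector $\tilde\omega$ of a vertex operator subalgebra $(U,\tilde\omega)$ with $\omega_n|_U=\tilde\omega_n|_U$ for $n\ge0$; $\operatorname{Sc}(V,\omega)$ is the set of these. $C_V(U)=\{v:u_nv=0\ \forall u\in U,n\ge0\}$ (graded, with weight-one part $C_V(U)_1$); $\langle\tilde\omega\rangle$ is the vertex subalgebra generated by $\tilde\omega$. Condition (T): for every $\tilde\omega\in\operatorname{Sc}(V,\omega)$, the natural map $C_V(C_V(\langle\tilde\omega\rangle))\otimes C_V(\langle\tilde\omega\rangle)\to V$, $u\otimes v\mapsto u_{-1}v$, is an isomorphism of vertex operator algebras. *)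

theory Defs
  imports Complex_Main "HOL-Library.Groups_Big_Fun"
begin

text \<open>
  A vertex algebra structure is given by the modes Y u n v (= u_n v,
  n an integer) and the vacuum vac; all structures live on a carrier set A of 'v
  (so that vertex subalgebras with their own conformal vectors are again VOAs).
\<close>

type_synonym 'v modes = "'v \<Rightarrow> int \<Rightarrow> 'v \<Rightarrow> 'v"

definition binom :: "int \<Rightarrow> nat \<Rightarrow> complex" where
  "binom m i = (of_int m :: complex) gchoose i"

text \<open>Borcherds (Jacobi) identity in component form; all sums have finite support.\<close>
definition borcherds :: "(complex \<Rightarrow> 'v::ab_group_add \<Rightarrow> 'v) \<Rightarrow> 'v modes
    \<Rightarrow> 'v \<Rightarrow> 'v \<Rightarrow> 'v \<Rightarrow> int \<Rightarrow> int \<Rightarrow> int \<Rightarrow> bool" where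
  "borcherds sm Y u v w m n p \<longleftrightarrow>
     (Sum_any (\<lambda>i. sm (binom m i) (Y (Y u (p + int i) v) (m + n - int i) w))) =
     (Sum_any (\<lambda>i. sm ((-1) powi (int i) * binom p i) (Y u (m + p - int i) (Y v (n + int i) w))))
   - (Sum_any (\<lambda>i. sm ((-1) powi (p + int i) * binom p i) (Y v (n + p - int i) (Y u (m + int i) w))))"

definition vertex_algebra :: "(complex \<Rightarrow> 'v::ab_group_add \<Rightarrow> 'v) \<Rightarrow> 'v modes \<Rightarrow> 'v
    \<Rightarrow> 'v set \<Rightarrow> bool" where
  "vertex_algebra sm Y vac A \<longleftrightarrow>
     vector_space sm \<and> module.subspace sm A \<and> vac \<in> A \<and>
     (\<forall>u\<in>A. \<forall>v\<in>A. \<forall>n. Y u n v \<in> A) \<and>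
     (\<forall>u\<in>A. \<forall>u'\<in>A. \<forall>v\<in>A. \<forall>n. Y (u + u') n v = Y u n v + Y u' n v) \<and>
     (\<forall>u\<in>A. \<forall>v\<in>A. \<forall>n c. Y (sm c u) n v = sm c (Y u n v)) \<and>
     (\<forall>u\<in>A. \<forall>v\<in>A. \<forall>v'\<in>A. \<forall>n. Y u n (v + v') = Y u n v + Y u n v') \<and>
     (\<forall>u\<in>A. \<forall>v\<in>A. \<forall>n c. Y u n (sm c v) = sm c (Y u n v)) \<and>
     (\<forall>u\<in>A. \<forall>v\<in>A. \<exists>N. \<forall>n\<ge>N. Y u n v = 0) \<and>
     (\<forall>v\<in>A. \<forall>n. Y vac n v = (if n = -1 then v else 0)) \<and>
     (\<forall>u\<in>A. Y u (-1) vac = u \<and> (\<forall>n\<ge>0. Y u n vac = 0)) \<and>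
     (\<forall>u\<in>A. \<forall>v\<in>A. \<forall>w\<in>A. \<forall>m n p. borcherds sm Y u v w m n p)"

definition vertex_subalgebra :: "(complex \<Rightarrow> 'v::ab_group_add \<Rightarrow> 'v) \<Rightarrow> 'v modes \<Rightarrow> 'v
    \<Rightarrow> 'v set \<Rightarrow> 'v set \<Rightarrow> bool" where
  "vertex_subalgebra sm Y vac A B \<longleftrightarrow>
     B \<subseteq> A \<and> module.subspace sm B \<and> vac \<in> B \<and> (\<forall>u\<in>B. \<forall>v\<in>B. \<forall>n. Y u n v \<in> B)"

definition generated :: "(complex \<Rightarrow> 'v::ab_group_add \<Rightarrow> 'v) \<Rightarrow> 'v modes \<Rightarrow> 'v
    \<Rightarrow> 'v set \<Rightarrow> 'v set \<Rightarrow> 'v set" where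
  "generated sm Y vac A S = \<Inter>{B. vertex_subalgebra sm Y vac A B \<and> S \<subseteq> B}"

text \<open>Weight-n subspace A_n of A with respect to L(0) = omega_1.\<close>
definition wt_space :: "(complex \<Rightarrow> 'v::ab_group_add \<Rightarrow> 'v) \<Rightarrow> 'v modes \<Rightarrow> 'v
    \<Rightarrow> 'v set \<Rightarrow> int \<Rightarrow> 'v set" where
  "wt_space sm Y \<omega> A n = {v \<in> A. Y \<omega> 1 v = sm (of_int n) v}"

text \<open>Here L(m) = omega_(m+1).\<close>
definition VOA :: "(complex \<Rightarrow> 'v::ab_group_add \<Rightarrow> 'v) \<Rightarrow> 'v modes \<Rightarrow> 'v \<Rightarrow> 'v
    \<Rightarrow> 'v set \<Rightarrow> bool" where
  "VOA sm Y vac \<omega> A \<longleftrightarrow>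
     vertex_algebra sm Y vac A \<and> \<omega> \<in> A \<and>
     A \<subseteq> module.span sm (\<Union>n. wt_space sm Y \<omega> A n) \<and>
     (\<forall>n. \<exists>B. finite B \<and> wt_space sm Y \<omega> A n \<subseteq> module.span sm B) \<and>
     (\<exists>N. \<forall>n<N. wt_space sm Y \<omega> A n = {0}) \<and>
     Y \<omega> 1 \<omega> = sm 2 \<omega> \<and>
     (\<exists>c::complex. \<forall>m n. \<forall>v\<in>A.
        Y \<omega> (m + 1) (Y \<omega> (n + 1) v) - Y \<omega> (n + 1) (Y \<omega> (m + 1) v) =
        sm (of_int (m - n)) (Y \<omega> (m + n + 1) v)
        + sm (if m + n = 0 then (of_int (m^3 - m) / 12) * c else 0) v) \<and>
     (\<forall>u\<in>A. \<forall>v\<in>A. \<forall>n. Y (Y \<omega> 0 u) n v = sm (- of_int n) (Y u (n - 1) v))"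

definition vertex_ideal :: "(complex \<Rightarrow> 'v::ab_group_add \<Rightarrow> 'v) \<Rightarrow> 'v modes
    \<Rightarrow> 'v set \<Rightarrow> 'v set \<Rightarrow> bool" where
  "vertex_ideal sm Y A I \<longleftrightarrow> I \<subseteq> A \<and> module.subspace sm I \<and>
     (\<forall>u\<in>A. \<forall>v\<in>I. \<forall>n. Y u n v \<in> I \<and> Y v n u \<in> I)"

definition simple_VOA :: "(complex \<Rightarrow> 'v::ab_group_add \<Rightarrow> 'v) \<Rightarrow> 'v modes \<Rightarrow> 'v \<Rightarrow> 'v
    \<Rightarrow> 'v set \<Rightarrow> bool" where
  "simple_VOA sm Y vac \<omega> A \<longleftrightarrow> VOA sm Y vac \<omega> A \<and> A \<noteq> {0} \<and>
     (\<forall>I. vertex_ideal sm Y A I \<longrightarrow> I = {0} \<or> I = A)"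

text \<open>Nondegenerate simple CFT type: V = direct sum of V_n, n \<ge> 0, V_0 = C vac,
  and the form on V_1 given by u_1 v = <u,v> vac is nondegenerate.\<close>
definition nondeg_simple_CFT :: "(complex \<Rightarrow> 'v::ab_group_add \<Rightarrow> 'v) \<Rightarrow> 'v modes \<Rightarrow> 'v
    \<Rightarrow> 'v \<Rightarrow> 'v set \<Rightarrow> bool" where
  "nondeg_simple_CFT sm Y vac \<omega> V \<longleftrightarrow> simple_VOA sm Y vac \<omega> V \<and>
     (\<forall>n<0. wt_space sm Y \<omega> V n = {0}) \<and>
     wt_space sm Y \<omega> V 0 = module.span sm {vac} \<and>
     (\<forall>u\<in>wt_space sm Y \<omega> V 1. (\<forall>v\<in>wt_space sm Y \<omega> V 1. Y u 1 v = 0) \<longrightarrow> u = 0)"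

definition commutant :: "'v::zero modes \<Rightarrow> 'v set \<Rightarrow> 'v set \<Rightarrow> 'v set" where
  "commutant Y A U = {v \<in> A. \<forall>u\<in>U. \<forall>n\<ge>0. Y u n v = 0}"

definition semi_conformal :: "(complex \<Rightarrow> 'v::ab_group_add \<Rightarrow> 'v) \<Rightarrow> 'v modes \<Rightarrow> 'v
    \<Rightarrow> 'v \<Rightarrow> 'v set \<Rightarrow> 'v set" where
  "semi_conformal sm Y vac \<omega> V = {\<omega>'. \<exists>U. vertex_subalgebra sm Y vac V U \<and>
      VOA sm Y vac \<omega>' U \<and> (\<forall>n\<ge>0. \<forall>u\<in>U. Y \<omega> n u = Y \<omega>' n u)}"

text \<open>The natural map C \<otimes> D \<rightarrow> A, u \<otimes> v \<mapsto> u_(-1) v, is an isomorphism of VOAs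
  (C, omega1) \<otimes> (D, omega2) \<cong> (A, omega), for some conformal vectors omega1, omega2.
  The algebraic tensor product is written out: the linear map is injective (for
  linearly independent u_i in C, sum u_i_(-1) v_i = 0 forces all v_i = 0), surjective,
  it preserves all products (the tensor product VOA has
  (a\<otimes>b)_n (a'\<otimes>b') = sum_i a_i a' \<otimes> b_(n-1-i) b'), and it maps the conformal vector
  omega1 \<otimes> vac + vac \<otimes> omega2 to omega (the vacuum goes to vac automatically).\<close>
definition tensor_iso :: "(complex \<Rightarrow> 'v::ab_group_add \<Rightarrow> 'v) \<Rightarrow> 'v modes \<Rightarrow> 'v
    \<Rightarrow> 'v \<Rightarrow> 'v set \<Rightarrow> 'v set \<Rightarrow> 'v set \<Rightarrow> bool" where
  "tensor_iso sm Y vac \<omega> A C D \<longleftrightarrow>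
     (\<exists>\<omega>1 \<omega>2. VOA sm Y vac \<omega>1 C \<and> VOA sm Y vac \<omega>2 D \<and>
        Y \<omega>1 (-1) vac + Y vac (-1) \<omega>2 = \<omega>) \<and>
     (\<forall>I::nat set. \<forall>f g. finite I \<longrightarrow> f ` I \<subseteq> C \<longrightarrow> g ` I \<subseteq> D \<longrightarrow> inj_on f I \<longrightarrow>
        \<not> module.dependent sm (f ` I) \<longrightarrow> (\<Sum>i\<in>I. Y (f i) (-1) (g i)) = 0 \<longrightarrow>
        (\<forall>i\<in>I. g i = 0)) \<and>
     A \<subseteq> module.span sm {Y u (-1) v | u v. u \<in> C \<and> v \<in> D} \<and>
     (\<forall>a\<in>C. \<forall>b\<in>D. \<forall>a'\<in>C. \<forall>b'\<in>D. \<forall>n.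
        Y (Y a (-1) b) n (Y a' (-1) b') = (Sum_any (\<lambda>i. Y (Y a i a') (-1) (Y b (n - 1 - i) b'))))"

definition condition_T :: "(complex \<Rightarrow> 'v::ab_group_add \<Rightarrow> 'v) \<Rightarrow> 'v modes \<Rightarrow> 'v
    \<Rightarrow> 'v \<Rightarrow> 'v set \<Rightarrow> bool" where
  "condition_T sm Y vac \<omega> V \<longleftrightarrow>
     (\<forall>\<omega>' \<in> semi_conformal sm Y vac \<omega> V.
        tensor_iso sm Y vac \<omega> V
          (commutant Y V (commutant Y V (generated sm Y vac V {\<omega>'})))
          (commutant Y V (generated sm Y vac V {\<omega>'})))"

end

theory Submission
  imports Defs
begin

context
  fixes sm :: "complex \<Rightarrow> 'v::ab_group_add \<Rightarrow> 'v" and Y :: "'v modes" and vac :: 'v and V :: "'v set"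
  assumes VA: "vertex_algebra sm Y vac V"
begin

interpretation vector_space sm using VA by (simp add: vertex_algebra_def)

lemma va_sub: "subspace V" using VA by (simp add: vertex_algebra_def)
lemma va_vac: "vac \<in> V" using VA by (simp add: vertex_algebra_def)
lemma va_closed: "u \<in> V \<Longrightarrow> v \<in> V \<Longrightarrow> Y u n v \<in> V" using VA by (simp add: vertex_algebra_def)
lemma va_addL: "u \<in> V \<Longrightarrow> u' \<in> V \<Longrightarrow> v \<in> V \<Longrightarrow> Y (u + u') n v = Y u n v + Y u' n v"
  using VA by (simp add: vertex_algebra_def)
lemma va_addR: "u \<in> V \<Longrightarrow> v \<in> V \<Longrightarrow> v' \<in> V \<Longrightarrow> Y u n (v + v') = Y u n v + Y u n v'"
  using VA by (simp add: vertex_algebra_def)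
lemma va_scL: "u \<in> V \<Longrightarrow> v \<in> V \<Longrightarrow> Y (sm c u) n v = sm c (Y u n v)"
  using VA by (simp add: vertex_algebra_def)
lemma va_scR: "u \<in> V \<Longrightarrow> v \<in> V \<Longrightarrow> Y u n (sm c v) = sm c (Y u n v)"
  using VA by (simp add: vertex_algebra_def)
lemma va_vacY: "v \<in> V \<Longrightarrow> Y vac n v = (if n = -1 then v else 0)"
  using VA by (simp add: vertex_algebra_def)
lemma va_creat: "u \<in> V \<Longrightarrow> Y u (-1) vac = u"
  using VA by (simp add: vertex_algebra_def)
lemma va_creat0: "u \<in> V \<Longrightarrow> n \<ge> 0 \<Longrightarrow> Y u n vac = 0"
  using VA by (simp add: vertex_algebra_def)
lemma va_borch: "u \<in> V \<Longrightarrow> v \<in> V \<Longrightarrow> w \<in> V \<Longrightarrow> borcherds sm Y u v w m n p"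
  using VA by (simp add: vertex_algebra_def)

lemma va_zero: "0 \<in> V" using va_sub by (simp add: subspace_def)
lemma va_plus: "x \<in> V \<Longrightarrow> y \<in> V \<Longrightarrow> x + y \<in> V" using va_sub by (simp add: subspace_def)
lemma va_sc: "x \<in> V \<Longrightarrow> sm c x \<in> V" using va_sub by (simp add: subspace_def)
lemma va_minus: "x \<in> V \<Longrightarrow> y \<in> V \<Longrightarrow> x - y \<in> V"
  using va_sub subspace_diff by blast

lemma va_zeroR: "u \<in> V \<Longrightarrow> Y u n 0 = 0"
  using va_addR[of u 0 0 n] va_zero by simp
lemma va_zeroL: "v \<in> V \<Longrightarrow> Y 0 n v = 0"
  using va_addL[of 0 0 v n] va_zero by simp
lemma va_diffL: "u \<in> V \<Longrightarrow> u' \<in> V \<Longrightarrow> v \<in> V \<Longrightarrow> Y (u - u') n v = Y u n v - Y u' n v"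
  using va_addL[of "u - u'" u' v n] va_minus by (simp add: eq_diff_eq)
lemma va_diffR: "u \<in> V \<Longrightarrow> v \<in> V \<Longrightarrow> v' \<in> V \<Longrightarrow> Y u n (v - v') = Y u n v - Y u n v'"
  using va_addR[of u "v - v'" v' n] va_minus by (simp add: eq_diff_eq)

lemma skew:
  assumes "u \<in> V" "v \<in> V"
  shows "Sum_any (\<lambda>i. sm (binom (-1) i) (Y (Y u (p + int i) v) (-1 + 0 - int i) vac)) = - sm ((-1) powi p) (Y v p u)"
proof -
  have B: "borcherds sm Y u v vac (-1) 0 p" using va_borch assms va_vac by blast
  have R1: "(\<lambda>i::nat. sm ((-1) powi (int i) * binom p i) (Y u (-1 + p - int i) (Y v (0 + int i) vac))) = (\<lambda>i. 0)"
    using va_creat0[OF assms(2)] va_zeroR[OF assms(1)] by auto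
  have R2: "Sum_any (\<lambda>i::nat. sm ((-1) powi (p + int i) * binom p i) (Y v (0 + p - int i) (Y u (-1 + int i) vac)))
     = sm ((-1) powi p) (Y v p u)"
  proof -
    have "Sum_any (\<lambda>i::nat. sm ((-1) powi (p + int i) * binom p i) (Y v (0 + p - int i) (Y u (-1 + int i) vac)))
       = sum (\<lambda>i::nat. sm ((-1) powi (p + int i) * binom p i) (Y v (0 + p - int i) (Y u (-1 + int i) vac))) {0}"
    proof (rule Sum_any.expand_superset)
      show "{a. sm ((-1) powi (p + int a) * binom p a) (Y v (0 + p - int a) (Y u (-1 + int a) vac)) \<noteq> 0} \<subseteq> {0}"
      proof
        fix a assume a: "a \<in> {a. sm ((-1) powi (p + int a) * binom p a) (Y v (0 + p - int a) (Y u (-1 + int a) vac)) \<noteq> 0}"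
        show "a \<in> {0}"
        proof (rule ccontr)
          assume "a \<notin> {0}"
          then have "Y u (-1 + int a) vac = 0" using va_creat0[OF assms(1)] by simp
          then show False using a va_zeroR[OF assms(2)] by simp
        qed
      qed
    qed simp
    also have "\<dots> = sm ((-1) powi p) (Y v p u)" using va_creat[OF assms(1)] by (simp add: binom_def)
    finally show ?thesis .
  qed
  show ?thesis using B unfolding borcherds_def R1 R2 by simp
qed

lemma comm_sub:
  assumes w: "w \<in> V"
  shows "vertex_subalgebra sm Y vac V {x\<in>V. \<forall>n\<ge>0. Y x n w = 0}"
  unfolding vertex_subalgebra_def
proof (intro conjI ballI allI)
  show "{x \<in> V. \<forall>n\<ge>0. Y x n w = 0} \<subseteq> V" by auto
  show "subspace {x \<in> V. \<forall>n\<ge>0. Y x n w = 0}"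
    by (rule subspaceI) (auto simp: va_zero va_zeroL va_plus va_addL va_sc va_scL w)
  show "vac \<in> {x \<in> V. \<forall>n\<ge>0. Y x n w = 0}" using va_vac va_vacY w by auto
  fix u v p assume u: "u \<in> {x \<in> V. \<forall>n\<ge>0. Y x n w = 0}" and v: "v \<in> {x \<in> V. \<forall>n\<ge>0. Y x n w = 0}"
  show "Y u p v \<in> {x \<in> V. \<forall>n\<ge>0. Y x n w = 0}"
  proof (simp add: va_closed[of u v] u[simplified] v[simplified], intro allI impI)
    fix n :: int assume n: "0 \<le> n"
    have B: "borcherds sm Y u v w 0 n p" using va_borch u v w by auto
    have L: "(\<lambda>i::nat. sm (binom 0 i) (Y (Y u (p + int i) v) (0 + n - int i) w))
       = (\<lambda>i. if i = 0 then Y (Y u p v) n w else 0)"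
      by (auto simp: binom_def gbinomial_0_left)
    have R1: "(\<lambda>i::nat. sm ((-1) powi (int i) * binom p i) (Y u (0 + p - int i) (Y v (n + int i) w))) = (\<lambda>i. 0)"
      using u v n va_zeroR by auto
    have R2: "(\<lambda>i::nat. sm ((-1) powi (p + int i) * binom p i) (Y v (n + p - int i) (Y u (0 + int i) w))) = (\<lambda>i. 0)"
      using u v n va_zeroR by auto
    show "Y (Y u p v) n w = 0" using B unfolding borcherds_def L R1 R2 by simp
  qed
qed

context
  fixes \<omega> assumes om: "\<omega> \<in> V"
begin

abbreviation "wt n \<equiv> wt_space sm Y \<omega> V n"

lemma wt_sub: "subspace (wt n)"
  by (rule subspaceI) (auto simp: wt_space_def va_zero va_zeroR om va_plus va_addR va_sc va_scR
      scale_right_distrib scale_scale mult.commute)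

lemma span_wt_V: "span (\<Union>n\<in>F. wt n) \<subseteq> V"
  by (rule span_minimal) (auto simp: wt_space_def va_sub)

lemma L_span: "z \<in> span (\<Union>n\<in>F. wt n) \<Longrightarrow> Y \<omega> 1 z \<in> span (\<Union>n\<in>F. wt n)"
proof -
  assume z: "z \<in> span (\<Union>n\<in>F. wt n)"
  have "z \<in> V \<and> Y \<omega> 1 z \<in> span (\<Union>n\<in>F. wt n)"
    using z
  proof (induct rule: span_induct_alt)
    case base
    then show ?case by (simp add: va_zero va_zeroR om span_zero)
  next
    case (step c x y)
    then obtain n where n: "n \<in> F" "x \<in> wt n" by auto
    then have xV: "x \<in> V" and Lx: "Y \<omega> 1 x = sm (of_int n) x" by (auto simp: wt_space_def)
    have "Y \<omega> 1 (sm c x + y) = sm c (sm (of_int n) x) + Y \<omega> 1 y"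
      using step xV Lx by (simp add: va_addR va_scR va_sc om)
    moreover have "sm c (sm (of_int n) x) \<in> span (\<Union>n\<in>F. wt n)"
      using n by (intro span_scale span_base) auto
    ultimately show ?case using step xV by (simp add: va_plus va_sc span_add)
  qed
  then show ?thesis by simp
qed

lemma eig_fin:
  assumes "finite F"
  shows "k \<notin> F \<Longrightarrow> z \<in> wt k \<Longrightarrow> z \<in> span (\<Union>n\<in>F. wt n) \<Longrightarrow> z = 0"
  using assms(1)
proof (induct F arbitrary: z)
  case empty
  then show ?case by simp
next
  case (insert m F)
  have "z \<in> span (wt m \<union> (\<Union>n\<in>F. wt n))" using insert by simp
  then obtain y z' where yz: "z = y + z'" "y \<in> span (wt m)" "z' \<in> span (\<Union>n\<in>F. wt n)"
    unfolding span_Un by blast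
  have y: "y \<in> wt m" using yz(2) span_eq_iff[of "wt m", THEN iffD2, OF wt_sub] by simp
  have z'V: "z' \<in> V" using yz(3) span_wt_V by blast
  have yV: "y \<in> V" and Ly: "Y \<omega> 1 y = sm (of_int m) y" using y by (auto simp: wt_space_def)
  have zV: "z \<in> V" and Lz: "Y \<omega> 1 z = sm (of_int k) z" using insert(5) by (auto simp: wt_space_def)
  have "Y \<omega> 1 z - sm (of_int m) z = Y \<omega> 1 z' - sm (of_int m) z'"
    using yz(1) yV z'V Ly by (simp add: va_addR om scale_right_distrib)
  moreover have "Y \<omega> 1 z' - sm (of_int m) z' \<in> span (\<Union>n\<in>F. wt n)"
    using L_span yz(3) by (intro span_diff span_scale) auto
  ultimately have A: "sm (of_int k - of_int m) z \<in> span (\<Union>n\<in>F. wt n)"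
    using Lz by (simp add: scale_left_diff_distrib)
  have W: "sm (of_int k - of_int m) z \<in> wt k"
    using insert(5) wt_sub by (simp add: subspace_def)
  have "sm (of_int k - of_int m) z = 0" using insert.hyps(3) W A insert(4) by blast
  moreover have "(of_int k - of_int m :: complex) \<noteq> 0" using insert(4) by auto
  ultimately show ?case by simp
qed

lemma eig:
  assumes "z \<in> wt k" "z \<in> span (\<Union>n\<in>{n. n \<noteq> k}. wt n)"
  shows "z = 0"
proof -
  have "\<exists>F. finite F \<and> k \<notin> F \<and> z \<in> span (\<Union>n\<in>F. wt n)"
    using assms(2)
  proof (induct rule: span_induct_alt)
    case base
    then show ?case by (intro exI[of _ "{}"]) (simp add: span_zero)
  next
    case (step c x y)
    then obtain F where F: "finite F" "k \<notin> F" "y \<in> span (\<Union>n\<in>F. wt n)" by auto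
    from step obtain n where n: "n \<noteq> k" "x \<in> wt n" by auto
    have "sm c x + y \<in> span (\<Union>n\<in>insert n F. wt n)"
      apply (intro span_add span_scale)
      using n apply (auto intro: span_base)[1]
      using F(3) by (rule subsetD[OF span_mono, rotated]) auto
    then show ?case using F n by (intro exI[of _ "insert n F"]) auto
  qed
  then show ?thesis using eig_fin assms(1) by blast
qed

end

lemma bilinL:
  assumes "u \<in> span P" "P \<subseteq> V" "d \<in> V" "\<And>p. p \<in> P \<Longrightarrow> Y p n d \<in> span Q"
  shows "Y u n d \<in> span Q"
proof -
  have "u \<in> V \<and> Y u n d \<in> span Q" using assms(1)
  proof (induct rule: span_induct_alt)
    case base then show ?case by (simp add: va_zero va_zeroL assms span_zero)
  next
    case (step c x y)
    then have xV: "x \<in> V" using assms(2) by auto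
    then show ?case using step assms
      by (simp add: va_plus va_sc va_addL va_scL span_add span_scale)
  qed
  then show ?thesis by simp
qed

lemma bilinR:
  assumes "d \<in> span P" "P \<subseteq> V" "u \<in> V" "\<And>p. p \<in> P \<Longrightarrow> Y u n p \<in> span Q"
  shows "Y u n d \<in> span Q"
proof -
  have "d \<in> V \<and> Y u n d \<in> span Q" using assms(1)
  proof (induct rule: span_induct_alt)
    case base then show ?case by (simp add: va_zero va_zeroR assms span_zero)
  next
    case (step c x y)
    then have xV: "x \<in> V" using assms(2) by auto
    then show ?case using step assms
      by (simp add: va_plus va_sc va_addR va_scR span_add span_scale)
  qed
  then show ?thesis by simp
qed

end

lemma dim_pos:
  assumes VS: "vector_space sm" and B: "finite B" "S \<subseteq> module.span sm B" and x: "x \<in> S" "x \<noteq> 0"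
  shows "vector_space.dim sm S > 0"
proof -
  interpret vector_space sm by (rule VS)
  obtain C where C: "C \<subseteq> S" "independent C" "S \<subseteq> span C" "card C = dim S"
    by (rule basis_exists)
  have "finite C" using independent_span_bound[OF B(1) C(2)] C(1) B(2) by blast
  moreover have "C \<noteq> {}" using C(3) x by auto
  ultimately show ?thesis unfolding C(4)[symmetric] by (simp add: card_gt_0_iff)
qed

lemma Sum_any_single:
  assumes "\<And>i. i \<noteq> j \<Longrightarrow> f i = (0::'a::comm_monoid_add)"
  shows "Sum_any f = f j"
proof -
  have "Sum_any f = sum f {j}" by (rule Sum_any.expand_superset) (use assms in auto)
  then show ?thesis by simp
qed

theorem lemma5p3:
  fixes sm :: "complex \<Rightarrow> 'v::ab_group_add \<Rightarrow> 'v"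
    and Y :: "'v \<Rightarrow> int \<Rightarrow> 'v \<Rightarrow> 'v"
    and vac \<omega> \<omega>' :: 'v
    and V :: "'v set"
  assumes "nondeg_simple_CFT sm Y vac \<omega> V"
    and "V = generated sm Y vac V (wt_space sm Y \<omega> V 1)"
    and "condition_T sm Y vac \<omega> V"
    and "\<omega>' \<in> semi_conformal sm Y vac \<omega> V"
    and "\<omega>' \<noteq> 0" and "\<omega>' \<noteq> \<omega>"
  shows "vector_space.dim sm (commutant Y V (commutant Y V (generated sm Y vac V {\<omega>'}))
            \<inter> wt_space sm Y \<omega> V 1) > 0
     \<and> vector_space.dim sm (commutant Y V (generated sm Y vac V {\<omega>'})
            \<inter> wt_space sm Y \<omega> V 1) > 0"
proof -
  have VOA: "VOA sm Y vac \<omega> V" using assms(1) by (simp add: nondeg_simple_CFT_def simple_VOA_def)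
  have VA: "vertex_algebra sm Y vac V" using VOA by (simp add: VOA_def)
  interpret vector_space sm using VA by (simp add: vertex_algebra_def)
  have omV: "\<omega> \<in> V" and omom: "Y \<omega> 1 \<omega> = sm 2 \<omega>" using VOA by (auto simp: VOA_def)
  obtain Bf where Bf: "finite Bf" "wt_space sm Y \<omega> V 1 \<subseteq> span Bf" using VOA unfolding VOA_def by blast
  have neg: "\<And>n. n < 0 \<Longrightarrow> wt_space sm Y \<omega> V n = {0}" and wt0: "wt_space sm Y \<omega> V 0 = span {vac}"
    using assms(1) by (auto simp: nondeg_simple_CFT_def)
  obtain U' where U': "vertex_subalgebra sm Y vac V U'" "VOA sm Y vac \<omega>' U'"
      "\<And>n u. n \<ge> 0 \<Longrightarrow> u \<in> U' \<Longrightarrow> Y \<omega> n u = Y \<omega>' n u"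
    using assms(4) unfolding semi_conformal_def by blast
  have om'U': "\<omega>' \<in> U'" and om'om': "Y \<omega>' 1 \<omega>' = sm 2 \<omega>'" using U'(2) by (auto simp: VOA_def)
  have om'V: "\<omega>' \<in> V" using U'(1) om'U' by (auto simp: vertex_subalgebra_def)
  define G where "G = generated sm Y vac V {\<omega>'}"
  define D where "D = commutant Y V G"
  define U where "U = commutant Y V D"
  have om'G: "\<omega>' \<in> G" by (simp add: G_def generated_def)
  have DV: "D \<subseteq> V" and UV: "U \<subseteq> V" by (auto simp: D_def U_def commutant_def)
  have TI: "tensor_iso sm Y vac \<omega> V U D" using assms(3,4) by (simp add: condition_T_def U_def D_def G_def)
  note TIu = TI[unfolded tensor_iso_def]
  have T1: "\<exists>\<omega>1 \<omega>2. VOA sm Y vac \<omega>1 U \<and> VOA sm Y vac \<omega>2 D \<and>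
        Y \<omega>1 (-1) vac + Y vac (-1) \<omega>2 = \<omega>"
    using TIu[THEN conjunct1] .
  have SPAN: "V \<subseteq> span {Y u (-1) v | u v. u \<in> U \<and> v \<in> D}"
    using TIu[THEN conjunct2, THEN conjunct2, THEN conjunct1] .
  have PF0: "\<forall>a\<in>U. \<forall>b\<in>D. \<forall>a'\<in>U. \<forall>b'\<in>D. \<forall>n.
        Y (Y a (-1) b) n (Y a' (-1) b') = (Sum_any (\<lambda>i. Y (Y a i a') (-1) (Y b (n - 1 - i) b')))"
    using TIu[THEN conjunct2, THEN conjunct2, THEN conjunct2] .
  obtain \<omega>1 \<omega>2 where VOAU: "VOA sm Y vac \<omega>1 U" and VOAD: "VOA sm Y vac \<omega>2 D"
    and om12: "Y \<omega>1 (-1) vac + Y vac (-1) \<omega>2 = \<omega>"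
    using T1 by blast
  have PF: "\<And>a b a' b' n. a \<in> U \<Longrightarrow> b \<in> D \<Longrightarrow> a' \<in> U \<Longrightarrow> b' \<in> D \<Longrightarrow>
        Y (Y a (-1) b) n (Y a' (-1) b') = Sum_any (\<lambda>i. Y (Y a i a') (-1) (Y b (n - 1 - i) b'))"
    using PF0 by blast
  have VAU: "vertex_algebra sm Y vac U" using VOAU by (simp add: VOA_def)
  have VAD: "vertex_algebra sm Y vac D" using VOAD by (simp add: VOA_def)
  have om1U: "\<omega>1 \<in> U" using VOAU by (simp add: VOA_def)
  have om2D: "\<omega>2 \<in> D" using VOAD by (simp add: VOA_def)
  have vacV: "vac \<in> V" by (rule va_vac[OF VA])
  have vacU: "vac \<in> U" using va_vac[OF VAU] .
  have vacD: "vac \<in> D" using va_vac[OF VAD] .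
  have om12': "\<omega> = \<omega>1 + \<omega>2"
  proof -
    have "\<omega>1 \<in> V" "\<omega>2 \<in> V" using om1U om2D UV DV by auto
    then show ?thesis using om12 va_creat[OF VA, of \<omega>1] va_vacY[OF VA, of \<omega>2 "-1"] by simp
  qed
  have om1V: "\<omega>1 \<in> V" and om2V: "\<omega>2 \<in> V" using om1U om2D UV DV by auto
  have L2U: "Y \<omega>2 1 u = 0" if u: "u \<in> U" for u
  proof -
    have uV: "u \<in> V" using u UV by auto
    have "Y (Y vac (-1) \<omega>2) 1 (Y u (-1) vac) = Sum_any (\<lambda>i. Y (Y vac i u) (-1) (Y \<omega>2 (1 - 1 - i) vac))"
      using PF vacU om2D u vacD by blast
    also have "(\<lambda>i. Y (Y vac i u) (-1) (Y \<omega>2 (1 - 1 - i) vac)) = (\<lambda>i. 0)"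
    proof
      fix i :: int
      show "Y (Y vac i u) (-1) (Y \<omega>2 (1 - 1 - i) vac) = 0"
      proof (cases "i = -1")
        case True then show ?thesis using va_vacY[OF VA uV] va_creat0[OF VA om2V, of 1] va_zeroR[OF VA uV] by simp
      next
        case False then show ?thesis using va_vacY[OF VA uV] va_zeroL[OF VA] va_closed[OF VA om2V vacV] by simp
      qed
    qed
    finally show ?thesis using va_vacY[OF VA om2V] va_creat[OF VA uV] by simp
  qed
  have L1D: "Y \<omega>1 1 d = 0" if d: "d \<in> D" for d
  proof -
    have dV: "d \<in> V" using d DV by auto
    have "Y (Y \<omega>1 (-1) vac) 1 (Y vac (-1) d) = Sum_any (\<lambda>i. Y (Y \<omega>1 i vac) (-1) (Y vac (1 - 1 - i) d))"
      using PF vacU om1U d vacD by blast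
    also have "(\<lambda>i. Y (Y \<omega>1 i vac) (-1) (Y vac (1 - 1 - i) d)) = (\<lambda>i. 0)"
    proof
      fix i :: int
      show "Y (Y \<omega>1 i vac) (-1) (Y vac (1 - 1 - i) d) = 0"
      proof (cases "i \<ge> 0")
        case True then show ?thesis using va_creat0[OF VA om1V] va_zeroL[OF VA] va_closed[OF VA vacV dV] by simp
      next
        case False then show ?thesis using va_vacY[OF VA dV] va_zeroR[OF VA] va_closed[OF VA om1V vacV] by simp
      qed
    qed
    finally show ?thesis using va_vacY[OF VA dV] va_creat[OF VA om1V] by simp
  qed
  have L1UD: "Y \<omega>1 1 (Y u (-1) d) = Y (Y \<omega>1 1 u) (-1) d" if u: "u \<in> U" and d: "d \<in> D" for u d
  proof -
    have uV: "u \<in> V" using u UV by auto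
    have dV: "d \<in> V" using d DV by auto
    have "Y (Y \<omega>1 (-1) vac) 1 (Y u (-1) d) = Sum_any (\<lambda>i. Y (Y \<omega>1 i u) (-1) (Y vac (1 - 1 - i) d))"
      using PF vacD om1U d u by blast
    also have "\<dots> = Y (Y \<omega>1 1 u) (-1) (Y vac (1 - 1 - 1) d)"
      by (rule Sum_any_single) (use va_vacY[OF VA dV] va_zeroR[OF VA] va_closed[OF VA om1V uV] in auto)
    finally show ?thesis using va_vacY[OF VA dV] va_creat[OF VA om1V] by simp
  qed
  have L2UD: "Y \<omega>2 1 (Y u (-1) d) = Y u (-1) (Y \<omega>2 1 d)" if u: "u \<in> U" and d: "d \<in> D" for u d
  proof -
    have uV: "u \<in> V" using u UV by auto
    have dV: "d \<in> V" using d DV by auto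
    have "Y (Y vac (-1) \<omega>2) 1 (Y u (-1) d) = Sum_any (\<lambda>i. Y (Y vac i u) (-1) (Y \<omega>2 (1 - 1 - i) d))"
      using PF vacU om2D d u by blast
    also have "\<dots> = Y (Y vac (-1) u) (-1) (Y \<omega>2 (1 - 1 - (-1)) d)"
      by (rule Sum_any_single) (use va_vacY[OF VA uV] va_zeroL[OF VA] va_closed[OF VA om2V dV] in auto)
    finally show ?thesis using va_vacY[OF VA uV] va_vacY[OF VA om2V] by simp
  qed
  have LU: "Y \<omega> 1 u = Y \<omega>1 1 u" if u: "u \<in> U" for u
    using u UV om12' va_addL[OF VA om1V om2V, of u 1] L2U by auto
  have LD: "Y \<omega> 1 d = Y \<omega>2 1 d" if d: "d \<in> D" for d
    using d DV om12' va_addL[OF VA om1V om2V, of d 1] L1D by auto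
  have UW: "U \<subseteq> span (\<Union>a. U \<inter> wt_space sm Y \<omega> V a)"
  proof -
    have "U \<subseteq> span (\<Union>n. wt_space sm Y \<omega>1 U n)" using VOAU by (simp add: VOA_def)
    also have "\<dots> \<subseteq> span (\<Union>a. U \<inter> wt_space sm Y \<omega> V a)"
      by (rule span_mono) (use UV in \<open>auto simp: wt_space_def LU subset_iff\<close>)
    finally show ?thesis .
  qed
  have DW: "D \<subseteq> span (\<Union>a. D \<inter> wt_space sm Y \<omega> V a)"
  proof -
    have "D \<subseteq> span (\<Union>n. wt_space sm Y \<omega>2 D n)" using VOAD by (simp add: VOA_def)
    also have "\<dots> \<subseteq> span (\<Union>a. D \<inter> wt_space sm Y \<omega> V a)"
      by (rule span_mono) (use DV in \<open>auto simp: wt_space_def LD subset_iff\<close>)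
    finally show ?thesis .
  qed
  have WT: "Y u (-1) d \<in> wt_space sm Y \<omega> V (a + b)"
    if u: "u \<in> U \<inter> wt_space sm Y \<omega> V a" and d: "d \<in> D \<inter> wt_space sm Y \<omega> V b" for u d a b
  proof -
    have uV: "u \<in> V" using u UV by auto
    have dV: "d \<in> V" using d DV by auto
    have Lu: "Y \<omega>1 1 u = sm (of_int a) u" using u LU by (auto simp: wt_space_def)
    have Ld: "Y \<omega>2 1 d = sm (of_int b) d" using d LD by (auto simp: wt_space_def)
    have XV: "Y u (-1) d \<in> V" using va_closed[OF VA uV dV] .
    have "Y \<omega> 1 (Y u (-1) d) = Y \<omega>1 1 (Y u (-1) d) + Y \<omega>2 1 (Y u (-1) d)"
      using om12' va_addL[OF VA om1V om2V XV] by simp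
    also have "\<dots> = sm (of_int a) (Y u (-1) d) + sm (of_int b) (Y u (-1) d)"
      using L1UD L2UD u d Lu Ld va_scL[OF VA uV dV] va_scR[OF VA uV dV] by auto
    also have "\<dots> = sm (of_int (a + b)) (Y u (-1) d)" by (simp add: scale_left_distrib)
    finally show ?thesis using XV by (simp add: wt_space_def)
  qed
  define H1 where "H1 = {Y u (-1) d | u d. \<exists>a b. a + b = 1 \<and> u \<in> U \<inter> wt_space sm Y \<omega> V a \<and> d \<in> D \<inter> wt_space sm Y \<omega> V b}"
  define Hn where "Hn = {Y u (-1) d | u d. \<exists>a b. a + b \<noteq> 1 \<and> u \<in> U \<inter> wt_space sm Y \<omega> V a \<and> d \<in> D \<inter> wt_space sm Y \<omega> V b}"
  have VH: "V \<subseteq> span (H1 \<union> Hn)"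
  proof -
    have "{Y u (-1) v | u v. u \<in> U \<and> v \<in> D} \<subseteq> span (H1 \<union> Hn)"
    proof clarify
      fix u d assume u: "u \<in> U" and d: "d \<in> D"
      show "Y u (-1) d \<in> span (H1 \<union> Hn)"
      proof (rule bilinL[OF VA])
        show "u \<in> span (\<Union>a. U \<inter> wt_space sm Y \<omega> V a)" using u UW by auto
        show "(\<Union>a. U \<inter> wt_space sm Y \<omega> V a) \<subseteq> V" using UV by auto
        show "d \<in> V" using d DV by auto
        fix p assume p: "p \<in> (\<Union>a. U \<inter> wt_space sm Y \<omega> V a)"
        then obtain a where pa: "p \<in> U \<inter> wt_space sm Y \<omega> V a" by auto
        show "Y p (-1) d \<in> span (H1 \<union> Hn)"
        proof (rule bilinR[OF VA])
          show "d \<in> span (\<Union>a. D \<inter> wt_space sm Y \<omega> V a)" using d DW by auto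
          show "(\<Union>a. D \<inter> wt_space sm Y \<omega> V a) \<subseteq> V" using DV by auto
          show "p \<in> V" using pa UV by auto
          fix q assume "q \<in> (\<Union>a. D \<inter> wt_space sm Y \<omega> V a)"
          then obtain b where qb: "q \<in> D \<inter> wt_space sm Y \<omega> V b" by auto
          have "Y p (-1) q \<in> H1 \<union> Hn"
          proof (cases "a + b = 1")
            case True then show ?thesis unfolding H1_def using pa qb by blast
          next
            case False then show ?thesis unfolding Hn_def using pa qb by blast
          qed
          then show "Y p (-1) q \<in> span (H1 \<union> Hn)" by (rule span_base)
        qed
      qed
    qed
    then have "span {Y u (-1) v | u v. u \<in> U \<and> v \<in> D} \<subseteq> span (H1 \<union> Hn)"
      by (rule span_minimal) simp
    then show ?thesis using SPAN by blast
  qed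
  have W1H: "wt_space sm Y \<omega> V 1 \<subseteq> span H1"
  proof
    fix x assume x: "x \<in> wt_space sm Y \<omega> V 1"
    then have "x \<in> span (H1 \<union> Hn)" using VH by (auto simp: wt_space_def)
    then obtain y z where yz: "x = y + z" "y \<in> span H1" "z \<in> span Hn" unfolding span_Un by blast
    have "span H1 \<subseteq> wt_space sm Y \<omega> V 1"
      proof (rule span_minimal)
      show "H1 \<subseteq> wt_space sm Y \<omega> V 1" unfolding H1_def using WT by fastforce
    qed (rule wt_sub[OF VA omV])
    then have y1: "y \<in> wt_space sm Y \<omega> V 1" using yz by auto
    have z1: "z \<in> wt_space sm Y \<omega> V 1"
      using subspace_diff[OF wt_sub[OF VA omV] x y1] yz(1) by simp
    have "Hn \<subseteq> (\<Union>n\<in>{n. n \<noteq> 1}. wt_space sm Y \<omega> V n)"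
      unfolding Hn_def using WT by fastforce
    then have "z \<in> span (\<Union>n\<in>{n. n \<noteq> 1}. wt_space sm Y \<omega> V n)" using yz(3) span_mono by blast
    then have "z = 0" using eig[OF VA omV z1] by blast
    then show "x \<in> span H1" using yz by simp
  qed
  have skewom: "Y \<omega>' p \<omega> = Y \<omega>' p \<omega>'" if p: "p \<ge> 0" for p
  proof -
    note S1 = skew[OF VA omV om'V, of p] and S2 = skew[OF VA om'V om'V, of p]
    have FE: "(\<lambda>i. sm (binom (-1) i) (Y (Y \<omega> (p + int i) \<omega>') (-1 + 0 - int i) vac))
        = (\<lambda>i. sm (binom (-1) i) (Y (Y \<omega>' (p + int i) \<omega>') (-1 + 0 - int i) vac))"
      using U'(3) om'U' p by auto
    have "- sm ((-1) powi p) (Y \<omega>' p \<omega>) = - sm ((-1) powi p) (Y \<omega>' p \<omega>')"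
      unfolding S1[symmetric] S2[symmetric] FE by (rule refl)
    then have "sm ((-1) powi p) (Y \<omega>' p \<omega>) = sm ((-1) powi p) (Y \<omega>' p \<omega>')"
      by (rule neg_equal_iff_equal[THEN iffD1])
    then have "sm ((-1) powi p) (Y \<omega>' p \<omega> - Y \<omega>' p \<omega>') = 0" by (simp add: scale_right_diff_distrib)
    moreover have "((-1::complex) powi p) \<noteq> 0" by simp
    ultimately show ?thesis by simp
  qed
  have wV: "\<omega> - \<omega>' \<in> V" using va_minus[OF VA omV om'V] .
  have wD: "\<omega> - \<omega>' \<in> D"
  proof -
    have SW: "vertex_subalgebra sm Y vac V {x\<in>V. \<forall>n\<ge>0. Y x n (\<omega> - \<omega>') = 0}" using comm_sub[OF VA wV] .
    have "\<omega>' \<in> {x\<in>V. \<forall>n\<ge>0. Y x n (\<omega> - \<omega>') = 0}"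
      using om'V skewom va_diffR[OF VA om'V omV om'V] by auto
    then have "G \<subseteq> {x\<in>V. \<forall>n\<ge>0. Y x n (\<omega> - \<omega>') = 0}"
      unfolding G_def generated_def using SW by blast
    then show ?thesis using wV by (auto simp: D_def commutant_def)
  qed
  have cases_ab: "a < 0 \<or> b < 0 \<or> (a = 1 \<and> b = 0) \<or> (a = 0 \<and> b = 1)" if "a + b = (1::int)" for a b
    using that by arith
  have gen_sub: "V \<subseteq> X" if X: "vertex_algebra sm Y vac X" "X \<subseteq> V" "wt_space sm Y \<omega> V 1 \<subseteq> X" for X
  proof -
    have "vertex_subalgebra sm Y vac V X"
      unfolding vertex_subalgebra_def using X va_sub[OF X(1)] va_vac[OF X(1)] va_closed[OF X(1)] by blast
    then show ?thesis using assms(2) X(3) unfolding generated_def by blast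
  qed
  have G1: "\<exists>x\<in>U \<inter> wt_space sm Y \<omega> V 1. x \<noteq> 0"
  proof (rule ccontr)
    assume N: "\<not> ?thesis"
    have "H1 \<subseteq> D"
    proof
      fix x assume "x \<in> H1"
      then obtain u d a b where x: "x = Y u (-1) d" "a + b = 1" "u \<in> U \<inter> wt_space sm Y \<omega> V a" "d \<in> D \<inter> wt_space sm Y \<omega> V b"
        unfolding H1_def by blast
      have uV: "u \<in> V" using x UV by auto
      have dV: "d \<in> V" using x DV by auto
      from cases_ab[OF x(2)] show "x \<in> D"
      proof (elim disjE conjE)
        assume "a < 0" then have "u = 0" using neg x(3) by auto
        then show ?thesis using x(1) va_zeroL[OF VA dV] va_zero[OF VAD] by simp
      next
        assume "b < 0" then have "d = 0" using neg x(4) by auto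
        then show ?thesis using x(1) va_zeroR[OF VA uV] va_zero[OF VAD] by simp
      next
        assume "a = 1" then have "u = 0" using N x(3) by auto
        then show ?thesis using x(1) va_zeroL[OF VA dV] va_zero[OF VAD] by simp
      next
        assume "a = 0" then have "u \<in> span {vac}" using wt0 x(3) by auto
        then obtain c where "u = sm c vac" unfolding span_singleton by auto
        then show ?thesis using x va_scL[OF VA vacV dV] va_vacY[OF VA dV] va_sc[OF VAD] by auto
      qed
    qed
    then have "span H1 \<subseteq> D" using span_minimal va_sub[OF VAD] by blast
    then have "V \<subseteq> D" using gen_sub[OF VAD DV] W1H by blast
    then have "Y \<omega>' 1 \<omega>' = 0" using om'V om'G by (auto simp: D_def commutant_def)
    then have "\<omega>' = 0" using om'om' by simp
    then show False using assms(5) by simp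
  qed
  have G2: "\<exists>x\<in>D \<inter> wt_space sm Y \<omega> V 1. x \<noteq> 0"
  proof (rule ccontr)
    assume N: "\<not> ?thesis"
    have "H1 \<subseteq> U"
    proof
      fix x assume "x \<in> H1"
      then obtain u d a b where x: "x = Y u (-1) d" "a + b = 1" "u \<in> U \<inter> wt_space sm Y \<omega> V a" "d \<in> D \<inter> wt_space sm Y \<omega> V b"
        unfolding H1_def by blast
      have uV: "u \<in> V" using x UV by auto
      have dV: "d \<in> V" using x DV by auto
      from cases_ab[OF x(2)] show "x \<in> U"
      proof (elim disjE conjE)
        assume "a < 0" then have "u = 0" using neg x(3) by auto
        then show ?thesis using x(1) va_zeroL[OF VA dV] va_zero[OF VAU] by simp
      next
        assume "b < 0" then have "d = 0" using neg x(4) by auto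
        then show ?thesis using x(1) va_zeroR[OF VA uV] va_zero[OF VAU] by simp
      next
        assume "a = 0" "b = 1" then have "d = 0" using N x(4) by auto
        then show ?thesis using x(1) va_zeroR[OF VA uV] va_zero[OF VAU] by simp
      next
        assume "b = 0" then have "d \<in> span {vac}" using wt0 x(4) by auto
        then obtain c where "d = sm c vac" unfolding span_singleton by auto
        then show ?thesis using x va_scR[OF VA uV vacV] va_creat[OF VA uV] va_sc[OF VAU] by auto
      qed
    qed
    then have "span H1 \<subseteq> U" using span_minimal va_sub[OF VAU] by blast
    then have "V \<subseteq> U" using gen_sub[OF VAU UV] W1H by blast
    then have "Y (\<omega> - \<omega>') 1 (\<omega> - \<omega>') = 0" using wV wD by (auto simp: U_def commutant_def)
    moreover have "Y \<omega>' 1 (\<omega> - \<omega>') = 0" using wD om'G by (auto simp: D_def commutant_def)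
    moreover have "Y (\<omega> - \<omega>') 1 (\<omega> - \<omega>') = Y \<omega> 1 (\<omega> - \<omega>') - Y \<omega>' 1 (\<omega> - \<omega>')"
      using va_diffL[OF VA omV om'V wV] .
    moreover have "Y \<omega> 1 (\<omega> - \<omega>') = sm 2 (\<omega> - \<omega>')"
      using va_diffR[OF VA omV omV om'V] omom U'(3)[of 1 \<omega>'] om'U' om'om'
      by (simp add: scale_right_diff_distrib)
    ultimately have "sm 2 (\<omega> - \<omega>') = 0" by simp
    then show False using assms(6) by simp
  qed
  have sub1: "U \<inter> wt_space sm Y \<omega> V 1 \<subseteq> span Bf" using Bf(2) by blast
  have sub2: "D \<inter> wt_space sm Y \<omega> V 1 \<subseteq> span Bf" using Bf(2) by blast
  obtain x1 where x1: "x1 \<in> U \<inter> wt_space sm Y \<omega> V 1" "x1 \<noteq> 0" using G1 by blast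
  obtain x2 where x2: "x2 \<in> D \<inter> wt_space sm Y \<omega> V 1" "x2 \<noteq> 0" using G2 by blast
  have "vector_space.dim sm (U \<inter> wt_space sm Y \<omega> V 1) > 0"
    by (rule dim_pos[OF vector_space_axioms Bf(1) sub1 x1])
  moreover have "vector_space.dim sm (D \<inter> wt_space sm Y \<omega> V 1) > 0"
    by (rule dim_pos[OF vector_space_axioms Bf(1) sub2 x2])
  ultimately show ?thesis by (simp add: U_def D_def G_def)
qed

end
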